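(* Let $T>0$ and let $\Sigma=(\mathcal X,\mathcal Y,M_U,M_D,\phi,\pi,H)$ be a $T$-periodic control system with outputs. If $\Sigma$ satisfies the IOS property from the input $u\in M_U$, then $\Sigma$ satisfies the UIOS property from the input $u\in M_U$.
   Context: Notation: $\mathbb R^+=[0,\infty)$. $K^+$: positive continuous functions on $\mathbb R^+$. $\mathcal N$: continuous non-decreasing $\rho:\mathbb R^+\to\mathbb R^+$ with $\rho(0)=0$. $K$: positive definite, increasing, continuous functions $\mathbb R^+\to\mathbb R^+$. $KL$: continuous $\sigma:\mathbb R^+\times\mathbb R^+\to\mathbb R^+$ with $\sigma(\cdot,t)\in K$ for each $t$ and $\sigma(s,\cdot)$ non-increasing tending to $0$. For a subset $U$ of a normed linear space $\mathcal U$ with $0\in U$, $\mathcal M(U)$ is the set of locally bounded $u:\mathbb R^+\to U$, $u_0$ the zero input, $B_U[0,r]=\{v\in U:\|v\|_{\mathcal U}\le r\}$. Control system with outputs $\Sigma=(\mathcal X,\mathcal Y,M_U,M_D,\phi,\pi,H)$: a set $U\subseteq\mathcal U$ ($0\in U$) and $M_U\subseteq\mathcal M(U)$ containing $u_0$; a set $D$ and $M_D\subseteq\mathcal M(D)$; normed linear spaces $\mathcal X,\mathcal Y$; a continuous $H:\mathbb R^+\times\mathcal X\times U\to\mathcal Y$ mapping bounded sets into bounded sets; a set-valued map $(t_0,x_0,u,d)\mapsto\pi(t_0,x_0,u,d)\subseteq[t_0,\infty)$ with $t_0\in\pi(t_0,x_0,u,d)$; a map $\phi:A_\phi\to\mathcal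 X$, $A_\phi\subseteq\mathbb R^+\times\mathbb R^+\times\mathcal X\times M_U\times M_D$, with: (1) for each $(t_0,x_0,u,d)$ some $t>t_0$ has $[t_0,t]\times\{(t_0,x_0,u,d)\}\subseteq A_\phi$; (2) $\phi(t_0,t_0,x_0,u,d)=x_0$; (3) causality: if $(t,t_0,x_0,u,d)\in A_\phi$, $t>t_0$, and $(\tilde u,\tilde d)$ agrees with $(u,d)$ on $[t_0,t]$, then $(t,t_0,x_0,\tilde u,\tilde d)\in A_\phi$ with the same value of $\phi$; (4) weak semigroup property: there is $r>0$ such that for each $t\ge t_0$ with $(t,t_0,x_0,u,d)\in A_\phi$: (a) $(\tau,t_0,x_0,u,d)\in A_\phi$ for $\tau\in[t_0,t]$; (b) $\phi(t,\tau,\phi(\tau,t_0,x_0,u,d),u,d)=\phi(t,t_0,x_0,u,d)$ for $\tau\in[t_0,t]\cap\pi(t_0,x_0,u,d)$; (c) if $(t+r,t_0,x_0,u,d)\in A_\phi$ then $\pi(t_0,x_0,u,d)\cap[t,t+r]\ne\emptyset$; (d) for $\tau\in\pi(t_0,x_0,u,d)$ with $(\tau,t_0,x_0,u,d)\in A_\phi$, $\pi(\tau,\phi(\tau,t_0,x_0,u,d),u,d)=\pi(t_0,x_0,u,d)\cap[\tau,\infty)$. $T$-periodic: (a) $H(t+T,x,u)=H(t,x,u)$ for all $(t,x,u)$; (b) for every $(u,d)\in M_U\times M_D$ and integer $k$ there are $P_{kT}u\in M_U$, $P_{kT}d\in M_D$ with $(P_{kT}u)(t)=u(t+kT)$, $(P_{kT}d)(t)=d(t+kT)$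 for all $t+kT\ge0$; (c) for each $(t,t_0,x_0,u,d)\in A_\phi$ with $t\ge t_0$ and each integer $k$ with $t_0-kT\ge0$: $(t-kT,t_0-kT,x_0,P_{kT}u,P_{kT}d)\in A_\phi$, $\pi(t_0-kT,x_0,P_{kT}u,P_{kT}d)=\{\tau-kT:\tau\in\pi(t_0,x_0,u,d)\}$ and $\phi(t,t_0,x_0,u,d)=\phi(t-kT,t_0-kT,x_0,P_{kT}u,P_{kT}d)$. BIC property: for each $(t_0,x_0,u,d)$ there is $t_{\max}\in(t_0,+\infty]$ with $A_\phi=\bigcup[t_0,t_{\max})\times\{(t_0,x_0,u,d)\}$, and if $t_{\max}<\infty$ then $\phi(\cdot,t_0,x_0,u,d)$ is unbounded on $[t_0,t_{\max})$. RFC from the input $u$: BIC and for all $r,T'\ge0$, $\sup\{\|\phi(t_0+s,t_0,x_0,u,d)\|_{\mathcal X}: u\in\mathcal M(B_U[0,r])\cap M_U, s\in[0,T'],\|x_0\|_{\mathcal X}\le r,t_0\in[0,T'],d\in M_D\}<\infty$. Robust equilibrium point from the input $u$: $H(t,0,0)=0$; $\phi(t,t_0,0,u_0,d)=0$ for all $t\ge t_0$, $d$; and for all $\varepsilon>0$, $T',h\ge0$ there is $\eta>0$ such that $\|x\|+\sup_t\|u(t)\|<\eta$, $t_0\in[0,T']$, $\tau\in[t_0,t_0+h]$, $d\in M_D$ imply $(\tau,t_0,x,u,d)\in A_\phi$ and $\|\phi(\tau,t_0,x,u,d)\|<\varepsilon$. IOS from the input $u\in M_U$: $\Sigma$ has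 BIC, is RFC from $u$, $0$ is a robust equilibrium point from $u$, and there exist $\sigma\in KL$, $\beta\in K^+$, $\gamma\in\mathcal N$ with $\|H(t,\phi(t,t_0,x_0,u,d),u(t))\|_{\mathcal Y}\le\sigma(\beta(t_0)\|x_0\|_{\mathcal X},t-t_0)+\sup_{t_0\le\tau\le t}\gamma(\|u(\tau)\|_{\mathcal U})$ for all $u\in M_U$, $(t_0,x_0,d)$, $t\ge t_0$. UIOS: the same with $\beta\equiv1$. *)

theory Defs
  imports "HOL-Analysis.Analysis"
begin

(* Time is modelled by real; only values on R+ = {0..} matter.
   Inputs u : R+ -> U and disturbances d : R+ -> D are functions real => _ ;
   all conditions on them are imposed for t >= 0 only. *)

type_synonym ('x,'u,'d) tuple = "real \<times> real \<times> 'x \<times> (real \<Rightarrow> 'u) \<times> (real \<Rightarrow> 'd)"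

definition classK_plus :: "(real \<Rightarrow> real) \<Rightarrow> bool" where
  "classK_plus \<beta> \<longleftrightarrow> continuous_on {0..} \<beta> \<and> (\<forall>t\<ge>0. \<beta> t > 0)"

definition classN :: "(real \<Rightarrow> real) \<Rightarrow> bool" where
  "classN \<rho> \<longleftrightarrow> continuous_on {0..} \<rho> \<and> mono_on {0..} \<rho> \<and> \<rho> 0 = 0 \<and> (\<forall>s\<ge>0. \<rho> s \<ge> 0)"

definition classK :: "(real \<Rightarrow> real) \<Rightarrow> bool" where
  "classK \<rho> \<longleftrightarrow> continuous_on {0..} \<rho> \<and> strict_mono_on {0..} \<rho> \<and> \<rho> 0 = 0
     \<and> (\<forall>s>0. \<rho> s > 0)"

definition classKL :: "(real \<Rightarrow> real \<Rightarrow> real) \<Rightarrow> bool" where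
  "classKL \<sigma> \<longleftrightarrow> continuous_on ({0..} \<times> {0..}) (\<lambda>p. \<sigma> (fst p) (snd p))
     \<and> (\<forall>t\<ge>0. classK (\<lambda>s. \<sigma> s t))
     \<and> (\<forall>s\<ge>0. antimono_on {0..} (\<lambda>t. \<sigma> s t) \<and> ((\<lambda>t. \<sigma> s t) \<longlongrightarrow> 0) at_top)"

definition Mset :: "'u::real_normed_vector set \<Rightarrow> (real \<Rightarrow> 'u) set" where
  "Mset U = {u. (\<forall>t\<ge>0. u t \<in> U) \<and> (\<forall>S\<ge>0. \<exists>M. \<forall>t\<in>{0..S}. norm (u t) \<le> M)}"

(* M(D) for the bare set D: functions R+ -> D (no norm available on D) *)
definition MsetD :: "'d set \<Rightarrow> (real \<Rightarrow> 'd) set" where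
  "MsetD D = {d. \<forall>t\<ge>0. d t \<in> D}"

definition agree_on :: "real set \<Rightarrow> (real \<Rightarrow> 'a) \<Rightarrow> (real \<Rightarrow> 'a) \<Rightarrow> bool" where
  "agree_on S f g \<longleftrightarrow> (\<forall>t\<in>S. f t = g t)"

(* Control system with outputs (X, Y, M_U, M_D, phi, pi, H); X = UNIV::'x, Y = UNIV::'y,
   A is the domain A_phi. *)
definition control_system ::
  "'u::real_normed_vector set \<Rightarrow> (real \<Rightarrow> 'u) set \<Rightarrow> 'd set \<Rightarrow> (real \<Rightarrow> 'd) set
   \<Rightarrow> (real \<Rightarrow> 'x::real_normed_vector \<Rightarrow> 'u \<Rightarrow> 'y::real_normed_vector)
   \<Rightarrow> (real \<Rightarrow> 'x \<Rightarrow> (real \<Rightarrow> 'u) \<Rightarrow> (real \<Rightarrow> 'd) \<Rightarrow> real set)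
   \<Rightarrow> (real \<Rightarrow> real \<Rightarrow> 'x \<Rightarrow> (real \<Rightarrow> 'u) \<Rightarrow> (real \<Rightarrow> 'd) \<Rightarrow> 'x)
   \<Rightarrow> ('x,'u,'d) tuple set \<Rightarrow> bool" where
  "control_system U MU D MD H \<pi> \<phi> A \<longleftrightarrow>
     0 \<in> U \<and> MU \<subseteq> Mset U \<and> (\<lambda>t. 0) \<in> MU \<and> MD \<subseteq> MsetD D
   \<and> continuous_on (({0..} \<times> UNIV) \<times> U) (\<lambda>p. H (fst (fst p)) (snd (fst p)) (snd p))
   \<and> (\<forall>r. \<exists>M. \<forall>t x v. 0 \<le> t \<and> t \<le> r \<and> norm x \<le> r \<and> v \<in> U \<and> norm v \<le> r
          \<longrightarrow> norm (H t x v) \<le> M)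
   \<and> (\<forall>t0 x0 u d. t0 \<ge> 0 \<and> u \<in> MU \<and> d \<in> MD \<longrightarrow>
          t0 \<in> \<pi> t0 x0 u d \<and> \<pi> t0 x0 u d \<subseteq> {t0..})
   \<and> A \<subseteq> {(t, t0, x0, u, d). t \<ge> 0 \<and> t0 \<ge> 0 \<and> u \<in> MU \<and> d \<in> MD}
   \<and> (\<forall>t0 x0 u d. t0 \<ge> 0 \<and> u \<in> MU \<and> d \<in> MD \<longrightarrow>
          (\<exists>t>t0. \<forall>\<tau>\<in>{t0..t}. (\<tau>, t0, x0, u, d) \<in> A))
   \<and> (\<forall>t0 x0 u d. t0 \<ge> 0 \<and> u \<in> MU \<and> d \<in> MD \<longrightarrow> \<phi> t0 t0 x0 u d = x0)
   \<and> (\<forall>t t0 x0 u d u' d'. (t, t0, x0, u, d) \<in> A \<and> t > t0 \<and> u' \<in> MU \<and> d' \<in> MD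
          \<and> agree_on {t0..t} u u' \<and> agree_on {t0..t} d d' \<longrightarrow>
          (t, t0, x0, u', d') \<in> A \<and> \<phi> t t0 x0 u' d' = \<phi> t t0 x0 u d)
   \<and> (\<exists>r>0. \<forall>t t0 x0 u d. (t, t0, x0, u, d) \<in> A \<and> t \<ge> t0 \<longrightarrow>
          (\<forall>\<tau>\<in>{t0..t}. (\<tau>, t0, x0, u, d) \<in> A)
        \<and> (\<forall>\<tau>\<in>{t0..t} \<inter> \<pi> t0 x0 u d. \<phi> t \<tau> (\<phi> \<tau> t0 x0 u d) u d = \<phi> t t0 x0 u d)
        \<and> ((t + r, t0, x0, u, d) \<in> A \<longrightarrow> \<pi> t0 x0 u d \<inter> {t..t+r} \<noteq> {})
        \<and> (\<forall>\<tau>\<in>\<pi> t0 x0 u d. (\<tau>, t0, x0, u, d) \<in> A \<longrightarrow>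
              \<pi> \<tau> (\<phi> \<tau> t0 x0 u d) u d = \<pi> t0 x0 u d \<inter> {\<tau>..}))"

(* T-periodicity; PU k u and PD k d stand for P_{kT} u and P_{kT} d *)
definition T_periodic ::
  "real \<Rightarrow> (real \<Rightarrow> 'u::real_normed_vector) set \<Rightarrow> (real \<Rightarrow> 'd) set
   \<Rightarrow> (real \<Rightarrow> 'x::real_normed_vector \<Rightarrow> 'u \<Rightarrow> 'y::real_normed_vector)
   \<Rightarrow> (real \<Rightarrow> 'x \<Rightarrow> (real \<Rightarrow> 'u) \<Rightarrow> (real \<Rightarrow> 'd) \<Rightarrow> real set)
   \<Rightarrow> (real \<Rightarrow> real \<Rightarrow> 'x \<Rightarrow> (real \<Rightarrow> 'u) \<Rightarrow> (real \<Rightarrow> 'd) \<Rightarrow> 'x)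
   \<Rightarrow> ('x,'u,'d) tuple set \<Rightarrow> bool" where
  "T_periodic T MU MD H \<pi> \<phi> A \<longleftrightarrow>
     (\<forall>t x v. t \<ge> 0 \<longrightarrow> H (t + T) x v = H t x v)
   \<and> (\<exists>PU PD. (\<forall>u\<in>MU. \<forall>k::int. PU k u \<in> MU \<and> (\<forall>t\<ge>0. t + k * T \<ge> 0 \<longrightarrow> PU k u t = u (t + k * T)))
     \<and> (\<forall>d\<in>MD. \<forall>k::int. PD k d \<in> MD \<and> (\<forall>t\<ge>0. t + k * T \<ge> 0 \<longrightarrow> PD k d t = d (t + k * T)))
     \<and> (\<forall>t t0 x0 u d. \<forall>k::int. (t, t0, x0, u, d) \<in> A \<and> t \<ge> t0 \<and> t0 - k * T \<ge> 0 \<longrightarrow>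
          (t - k * T, t0 - k * T, x0, PU k u, PD k d) \<in> A
        \<and> \<pi> (t0 - k * T) x0 (PU k u) (PD k d) = (\<lambda>\<tau>. \<tau> - k * T) ` \<pi> t0 x0 u d
        \<and> \<phi> t t0 x0 u d = \<phi> (t - k * T) (t0 - k * T) x0 (PU k u) (PD k d)))"

definition BIC :: "(real \<Rightarrow> 'u::real_normed_vector) set \<Rightarrow> (real \<Rightarrow> 'd) set
   \<Rightarrow> (real \<Rightarrow> real \<Rightarrow> 'x::real_normed_vector \<Rightarrow> (real \<Rightarrow> 'u) \<Rightarrow> (real \<Rightarrow> 'd) \<Rightarrow> 'x)
   \<Rightarrow> ('x,'u,'d) tuple set \<Rightarrow> bool" where
  "BIC MU MD \<phi> A \<longleftrightarrow>
     (\<forall>t0 x0 u d. t0 \<ge> 0 \<and> u \<in> MU \<and> d \<in> MD \<longrightarrow>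
        (\<exists>tmax::ereal. ereal t0 < tmax
          \<and> (\<forall>t. (t, t0, x0, u, d) \<in> A \<longleftrightarrow> t0 \<le> t \<and> ereal t < tmax)
          \<and> (tmax \<noteq> \<infinity> \<longrightarrow>
               \<not> bounded ((\<lambda>t. \<phi> t t0 x0 u d) ` {t0..<real_of_ereal tmax}))))"

definition RFC :: "'u::real_normed_vector set \<Rightarrow> (real \<Rightarrow> 'u) set \<Rightarrow> (real \<Rightarrow> 'd) set
   \<Rightarrow> (real \<Rightarrow> real \<Rightarrow> 'x::real_normed_vector \<Rightarrow> (real \<Rightarrow> 'u) \<Rightarrow> (real \<Rightarrow> 'd) \<Rightarrow> 'x)
   \<Rightarrow> ('x,'u,'d) tuple set \<Rightarrow> bool" where
  "RFC U MU MD \<phi> A \<longleftrightarrow> BIC MU MD \<phi> A \<and>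
     (\<forall>r\<ge>0. \<forall>T'\<ge>0. \<exists>M. \<forall>u s x0 t0 d.
        u \<in> MU \<and> (\<forall>t\<ge>0. norm (u t) \<le> r) \<and> 0 \<le> s \<and> s \<le> T' \<and> norm x0 \<le> r
        \<and> 0 \<le> t0 \<and> t0 \<le> T' \<and> d \<in> MD \<and> (t0 + s, t0, x0, u, d) \<in> A
        \<longrightarrow> norm (\<phi> (t0 + s) t0 x0 u d) \<le> M)"

definition robust_eq :: "(real \<Rightarrow> 'u::real_normed_vector) set \<Rightarrow> (real \<Rightarrow> 'd) set
   \<Rightarrow> (real \<Rightarrow> 'x::real_normed_vector \<Rightarrow> 'u \<Rightarrow> 'y::real_normed_vector)
   \<Rightarrow> (real \<Rightarrow> real \<Rightarrow> 'x \<Rightarrow> (real \<Rightarrow> 'u) \<Rightarrow> (real \<Rightarrow> 'd) \<Rightarrow> 'x)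
   \<Rightarrow> ('x,'u,'d) tuple set \<Rightarrow> bool" where
  "robust_eq MU MD H \<phi> A \<longleftrightarrow>
     (\<forall>t\<ge>0. H t 0 0 = 0)
   \<and> (\<forall>t t0 d. 0 \<le> t0 \<and> t0 \<le> t \<and> d \<in> MD \<longrightarrow>
        (t, t0, 0, (\<lambda>_. 0), d) \<in> A \<and> \<phi> t t0 0 (\<lambda>_. 0) d = 0)
   \<and> (\<forall>\<epsilon>>0. \<forall>T'\<ge>0. \<forall>h\<ge>0. \<exists>\<eta>>0. \<forall>x u t0 \<tau> d.
        u \<in> MU \<and> (\<exists>c. (\<forall>t\<ge>0. norm (u t) \<le> c) \<and> norm x + c < \<eta>)
        \<and> 0 \<le> t0 \<and> t0 \<le> T' \<and> t0 \<le> \<tau> \<and> \<tau> \<le> t0 + h \<and> d \<in> MD \<longrightarrow>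
        (\<tau>, t0, x, u, d) \<in> A \<and> norm (\<phi> \<tau> t0 x u d) < \<epsilon>)"

definition IOS_bound :: "(real \<Rightarrow> 'u::real_normed_vector) set \<Rightarrow> (real \<Rightarrow> 'd) set
   \<Rightarrow> (real \<Rightarrow> 'x::real_normed_vector \<Rightarrow> 'u \<Rightarrow> 'y::real_normed_vector)
   \<Rightarrow> (real \<Rightarrow> real \<Rightarrow> 'x \<Rightarrow> (real \<Rightarrow> 'u) \<Rightarrow> (real \<Rightarrow> 'd) \<Rightarrow> 'x)
   \<Rightarrow> ('x,'u,'d) tuple set
   \<Rightarrow> (real \<Rightarrow> real \<Rightarrow> real) \<Rightarrow> (real \<Rightarrow> real) \<Rightarrow> (real \<Rightarrow> real) \<Rightarrow> bool" where
  "IOS_bound MU MD H \<phi> A \<sigma> \<beta> \<gamma> \<longleftrightarrow>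
     (\<forall>u t0 x0 d t. u \<in> MU \<and> d \<in> MD \<and> 0 \<le> t0 \<and> t0 \<le> t \<and> (t, t0, x0, u, d) \<in> A \<longrightarrow>
        norm (H t (\<phi> t t0 x0 u d) (u t))
          \<le> \<sigma> (\<beta> t0 * norm x0) (t - t0) + (SUP \<tau>\<in>{t0..t}. \<gamma> (norm (u \<tau>))))"

definition IOS where
  "IOS U MU MD H \<phi> A \<longleftrightarrow> BIC MU MD \<phi> A \<and> RFC U MU MD \<phi> A \<and> robust_eq MU MD H \<phi> A
     \<and> (\<exists>\<sigma> \<beta> \<gamma>. classKL \<sigma> \<and> classK_plus \<beta> \<and> classN \<gamma> \<and> IOS_bound MU MD H \<phi> A \<sigma> \<beta> \<gamma>)"

definition UIOS where
  "UIOS U MU MD H \<phi> A \<longleftrightarrow> BIC MU MD \<phi> A \<and> RFC U MU MD \<phi> A \<and> robust_eq MU MD H \<phi> A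
     \<and> (\<exists>\<sigma> \<gamma>. classKL \<sigma> \<and> classN \<gamma> \<and> IOS_bound MU MD H \<phi> A \<sigma> (\<lambda>_. 1) \<gamma>)"

end

theory Submission
  imports Defs
begin

lemma H_shift:
  assumes "\<forall>t x v. t \<ge> 0 \<longrightarrow> H (t + T) x v = H t x v" "y \<ge> 0" "T > 0"
  shows "H (y + real n * T) x v = H y x v"
proof (induction n)
  case 0 then show ?case by simp
next
  case (Suc n)
  have "y + real (Suc n) * T = (y + real n * T) + T" by (simp add: algebra_simps)
  moreover have "y + real n * T \<ge> 0" using assms by simp
  ultimately show ?case using assms(1) Suc by (metis (no_types))
qed

lemma KL_scale:
  assumes "classKL \<sigma>" "b > 0"
  shows "classKL (\<lambda>s t. \<sigma> (b * s) t)"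
proof -
  have c: "continuous_on ({0..} \<times> {0..}) (\<lambda>p. \<sigma> (fst p) (snd p))"
    using assms unfolding classKL_def by blast
  have "continuous_on ({0..} \<times> {0..}) ((\<lambda>p. \<sigma> (fst p) (snd p)) \<circ> (\<lambda>p. (b * fst p, snd p)))"
  proof (rule continuous_on_compose)
    show "continuous_on ({0..} \<times> {0..}) (\<lambda>p::real\<times>real. (b * fst p, snd p))"
      by (intro continuous_intros)
    show "continuous_on ((\<lambda>p::real\<times>real. (b * fst p, snd p)) ` ({0..} \<times> {0..})) (\<lambda>p. \<sigma> (fst p) (snd p))"
      by (rule continuous_on_subset[OF c]) (use assms in auto)
  qed
  hence c2: "continuous_on ({0..} \<times> {0..}) (\<lambda>p. \<sigma> (b * fst p) (snd p))" by (simp add: o_def)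
  have K: "classK (\<lambda>s. \<sigma> (b * s) t)" if "t \<ge> 0" for t
  proof -
    have k: "classK (\<lambda>s. \<sigma> s t)" using assms that unfolding classKL_def by blast
    have "continuous_on {0..} ((\<lambda>s. \<sigma> s t) \<circ> (\<lambda>s. b * s))"
      apply (rule continuous_on_compose)
       apply (intro continuous_intros)
      apply (rule continuous_on_subset) using k unfolding classK_def apply blast
      using assms by auto
    moreover have "strict_mono_on {0..} (\<lambda>s. \<sigma> (b * s) t)"
      using k assms unfolding classK_def strict_mono_on_def
      by (auto simp: mult_strict_left_mono)
    moreover have "\<forall>s>0. \<sigma> (b * s) t > 0" using k assms unfolding classK_def by auto
    ultimately show ?thesis using k unfolding classK_def by (simp add: o_def)
  qed
  have "antimono_on {0..} (\<lambda>t. \<sigma> (b * s) t) \<and> ((\<lambda>t. \<sigma> (b * s) t) \<longlongrightarrow> 0) at_top"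
    if "s \<ge> 0" for s
    using assms that unfolding classKL_def by auto
  then show ?thesis unfolding classKL_def using c2 K by blast
qed

theorem lemma2p19:
  fixes T :: real
    and U :: "'u::real_normed_vector set" and MU :: "(real \<Rightarrow> 'u) set"
    and D :: "'d set" and MD :: "(real \<Rightarrow> 'd) set"
    and H :: "real \<Rightarrow> 'x::real_normed_vector \<Rightarrow> 'u \<Rightarrow> 'y::real_normed_vector"
    and \<pi> :: "real \<Rightarrow> 'x \<Rightarrow> (real \<Rightarrow> 'u) \<Rightarrow> (real \<Rightarrow> 'd) \<Rightarrow> real set"
    and \<phi> :: "real \<Rightarrow> real \<Rightarrow> 'x \<Rightarrow> (real \<Rightarrow> 'u) \<Rightarrow> (real \<Rightarrow> 'd) \<Rightarrow> 'x"
    and A :: "('x,'u,'d) tuple set"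
  assumes "T > 0"
    and "control_system U MU D MD H \<pi> \<phi> A"
    and "T_periodic T MU MD H \<pi> \<phi> A"
    and "IOS U MU MD H \<phi> A"
  shows "UIOS U MU MD H \<phi> A"
proof -
  have T: "T > 0" by fact
  obtain \<sigma> \<beta> \<gamma> where s: "classKL \<sigma>" and be: "classK_plus \<beta>" and g: "classN \<gamma>"
    and ib: "IOS_bound MU MD H \<phi> A \<sigma> \<beta> \<gamma>" and rest: "BIC MU MD \<phi> A" "RFC U MU MD \<phi> A" "robust_eq MU MD H \<phi> A"
    using assms(4) unfolding IOS_def by blast
  have Hp: "\<forall>t x v. t \<ge> 0 \<longrightarrow> H (t + T) x v = H t x v" using assms(3) unfolding T_periodic_def by blast
  obtain PU :: "real \<Rightarrow> (real \<Rightarrow> 'u) \<Rightarrow> real \<Rightarrow> 'u" and PD :: "real \<Rightarrow> (real \<Rightarrow> 'd) \<Rightarrow> real \<Rightarrow> 'd" where PU: "\<forall>u\<in>MU. \<forall>k::int. PU k u \<in> MU \<and> (\<forall>t\<ge>0. t + k * T \<ge> 0 \<longrightarrow> PU k u t = u (t + k * T))"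
    and PD: "\<forall>d\<in>MD. \<forall>k::int. PD k d \<in> MD \<and> (\<forall>t\<ge>0. t + k * T \<ge> 0 \<longrightarrow> PD k d t = d (t + k * T))"
    and PA: "\<forall>t t0 x0 u d. \<forall>k::int. (t, t0, x0, u, d) \<in> A \<and> t \<ge> t0 \<and> t0 - k * T \<ge> 0 \<longrightarrow>
          (t - k * T, t0 - k * T, x0, PU k u, PD k d) \<in> A
        \<and> \<pi> (t0 - k * T) x0 (PU k u) (PD k d) = (\<lambda>\<tau>. \<tau> - k * T) ` \<pi> t0 x0 u d
        \<and> \<phi> t t0 x0 u d = \<phi> (t - k * T) (t0 - k * T) x0 (PU k u) (PD k d)"
  proof -
    have "\<exists>(PU :: real \<Rightarrow> (real \<Rightarrow> 'u) \<Rightarrow> real \<Rightarrow> 'u) (PD :: real \<Rightarrow> (real \<Rightarrow> 'd) \<Rightarrow> real \<Rightarrow> 'd). (\<forall>u\<in>MU. \<forall>k::int. PU k u \<in> MU \<and> (\<forall>t\<ge>0. t + k * T \<ge> 0 \<longrightarrow> PU k u t = u (t + k * T)))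
     \<and> (\<forall>d\<in>MD. \<forall>k::int. PD k d \<in> MD \<and> (\<forall>t\<ge>0. t + k * T \<ge> 0 \<longrightarrow> PD k d t = d (t + k * T)))
     \<and> (\<forall>t t0 x0 u d. \<forall>k::int. (t, t0, x0, u, d) \<in> A \<and> t \<ge> t0 \<and> t0 - k * T \<ge> 0 \<longrightarrow>
          (t - k * T, t0 - k * T, x0, PU k u, PD k d) \<in> A
        \<and> \<pi> (t0 - k * T) x0 (PU k u) (PD k d) = (\<lambda>\<tau>. \<tau> - k * T) ` \<pi> t0 x0 u d
        \<and> \<phi> t t0 x0 u d = \<phi> (t - k * T) (t0 - k * T) x0 (PU k u) (PD k d))"
      using assms(3) unfolding T_periodic_def by (rule conjunct2)
    then show ?thesis using that by (elim exE conjE)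
  qed
  have "continuous_on {0..T} \<beta>"
    using be unfolding classK_plus_def by (auto intro: continuous_on_subset)
  then obtain m where m: "m \<in> {0..T}" "\<forall>y\<in>{0..T}. \<beta> y \<le> \<beta> m"
    using continuous_attains_sup[of "{0..T}" \<beta>] T by auto
  define b where "b = \<beta> m"
  have bpos: "b > 0" using be m unfolding classK_plus_def b_def by auto
  have bnd: "IOS_bound MU MD H \<phi> A (\<lambda>s t. \<sigma> (b * s) t) (\<lambda>_. 1) \<gamma>"
    unfolding IOS_bound_def
  proof (intro allI impI)
    fix u t0 x0 d t
    assume a: "u \<in> MU \<and> d \<in> MD \<and> 0 \<le> t0 \<and> t0 \<le> t \<and> (t, t0, x0, u, d) \<in> A"
    define k where "k = \<lfloor>t0 / T\<rfloor>"
    define s where "s = t0 - k * T"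
    have k0: "k \<ge> 0" using a T unfolding k_def by simp
    have "real_of_int k \<le> t0 / T" unfolding k_def by simp
    hence s0: "s \<ge> 0" using T unfolding s_def by (simp add: field_simps)
    have "t0 / T < real_of_int k + 1" unfolding k_def by linarith
    hence sT: "s \<le> T" using T unfolding s_def by (simp add: field_simps)
    have pa: "(t - k * T, s, x0, PU k u, PD k d) \<in> A"
      and pe: "\<phi> t t0 x0 u d = \<phi> (t - k * T) s x0 (PU k u) (PD k d)"
      using PA a s0 unfolding s_def by blast+
    have pum: "PU k u \<in> MU" "PD k d \<in> MD" using PU PD a by blast+
    have st: "s \<le> t - k * T" using a unfolding s_def by simp
    have I: "norm (H (t - k*T) (\<phi> (t - k * T) s x0 (PU k u) (PD k d)) (PU k u (t - k*T)))
        \<le> \<sigma> (\<beta> s * norm x0) (t - k*T - s) + (SUP \<tau>\<in>{s..t - k*T}. \<gamma> (norm (PU k u \<tau>)))"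
      using ib pa pum s0 st unfolding IOS_bound_def by blast
    have e1: "t - k*T - s = t - t0" unfolding s_def by simp
    have e2: "PU k u (t - k*T) = u t" using PU a s0 st by auto
    have e3: "H (t - k*T) y v = H t y v" for y v
    proof -
      have "H (t - k*T + real (nat k) * T) y v = H (t - k*T) y v"
        by (rule H_shift[OF Hp _ T]) (use s0 st in linarith)
      then show ?thesis using k0 by simp
    qed
    have e4: "(SUP \<tau>\<in>{s..t - k*T}. \<gamma> (norm (PU k u \<tau>))) = (SUP \<tau>\<in>{t0..t}. \<gamma> (norm (u \<tau>)))"
    proof -
      have "(SUP \<tau>\<in>{s..t - k*T}. \<gamma> (norm (PU k u \<tau>))) = (SUP \<tau>\<in>{s..t - k*T}. \<gamma> (norm (u (\<tau> + k*T))))"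
      proof (intro SUP_cong refl)
        fix x assume "x \<in> {s..t - k*T}"
        then have "PU k u x = u (x + k*T)" using PU a s0 unfolding s_def by auto
        then show "\<gamma> (norm (PU k u x)) = \<gamma> (norm (u (x + k*T)))" by simp
      qed
      also have "\<dots> = (SUP \<tau>\<in>(\<lambda>\<tau>. \<tau> + k*T) ` {s..t - k*T}. \<gamma> (norm (u \<tau>)))"
        by (simp only: image_image)
      also have "(\<lambda>\<tau>. \<tau> + k*T) ` {s..t - k*T} = {t0..t}"
        unfolding image_add_atLeastAtMost' s_def by simp
      finally show ?thesis .
    qed
    have sk: "classK (\<lambda>r. \<sigma> r (t - t0))" using s a unfolding classKL_def by auto
    have "\<beta> s \<le> b" using m s0 sT unfolding b_def by auto
    moreover have "\<beta> s > 0" using be s0 unfolding classK_plus_def by auto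
    ultimately have "\<sigma> (\<beta> s * norm x0) (t - t0) \<le> \<sigma> (b * norm x0) (t - t0)"
    proof -
      have sm: "strict_mono_on {0..} (\<lambda>r. \<sigma> r (t - t0))" using sk unfolding classK_def by blast
      assume h: "\<beta> s \<le> b" "\<beta> s > 0"
      have "\<beta> s * norm x0 \<le> b * norm x0" using h by (simp add: mult_right_mono)
      moreover have "0 \<le> \<beta> s * norm x0" using h by simp
      ultimately show ?thesis using strict_mono_on_leD[OF sm] by (meson atLeast_iff order_trans)
    qed
    then show "norm (H t (\<phi> t t0 x0 u d) (u t))
          \<le> \<sigma> (b * ((\<lambda>_. 1) t0 * norm x0)) (t - t0) + (SUP \<tau>\<in>{t0..t}. \<gamma> (norm (u \<tau>)))"
      using I unfolding e1 e2 e3 e4 pe[symmetric] by simp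
  qed
  show ?thesis unfolding UIOS_def using rest g KL_scale[OF s bpos] bnd by blast
qed

end
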